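(* There exist pairwise disjoint closed disks $\mathcal D_0,\mathcal D_1\subseteq \mathbb S^2$ and a continuous map $f\colon \mathbb S^2\to\mathbb S^2$ such that: (i) $f^{-1}(\mathcal D_0)=\mathcal D_0$ and $f|_{\mathcal D_0}\colon\mathcal D_0\to\mathcal D_0$ is the identity map; (ii) $f^{-1}(\mathcal D_1)$ is the union of pairwise disjoint closed disks $\mathcal D_{1,1},\mathcal D_{1,2},\mathcal D_{1,3}$ in $\mathbb S^2$, and $f|_{\mathcal D_{1,k}}\colon \mathcal D_{1,k}\to\mathcal D_1$ is a homeomorphism for each $k\in\{1,2,3\}$. Further, there is a loop $\gamma$ in $\mathbb S^2\setminus \mathrm{int}(\mathcal D_0\cup\mathcal D_{1,1}\cup\mathcal D_{1,2}\cup\mathcal D_{1,3})$ which is not homotopically trivial in $\mathbb S^2\setminus \mathrm{int}(\mathcal D_0\cup\mathcal D_{1,1}\cup\mathcal D_{1,2}\cup\mathcal D_{1,3})$, but such that $f(\gamma)$ is null-homotopic in $\mathbb S^2\setminus\mathrm{int}(\mathcal D_0\cup\mathcal D_1)$. *)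

theory Defs
  imports "HOL-Analysis.Analysis"
begin

definition S2 :: "(real^3) set" where
  "S2 = sphere 0 1"

definition closed_disk_S2 :: "(real^3) set \<Rightarrow> bool" where
  "closed_disk_S2 D \<longleftrightarrow> D \<subseteq> S2 \<and> D homeomorphic (cball (0::real^2) 1)"

definition int_S2 :: "(real^3) set \<Rightarrow> (real^3) set" where
  "int_S2 A = (top_of_set S2) interior_of A"

end

theory Submission
  imports Defs "HOL-Complex_Analysis.Winding_Numbers"
begin


definition "ee1 = (vector [1,0,0] :: real^3)"
definition "ee2 = (vector [0,1,0] :: real^3)"
definition "ee3 = (vector [0,0,1] :: real^3)"

lemma vec3_eq: "(vector [a, b, c] :: real^3) = a *\<^sub>R ee1 + b *\<^sub>R ee2 + c *\<^sub>R ee3"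
  by (simp add: vec_eq_iff forall_3 ee1_def ee2_def ee3_def)

lemma cont_vec3:
  assumes "continuous_on S a" "continuous_on S b" "continuous_on S c"
  shows "continuous_on S (\<lambda>x. vector [a x, b x, c x] :: real^3)"
  unfolding vec3_eq by (intro continuous_on_add continuous_on_scaleR assms continuous_on_const)

definition "ff1 = (vector [1,0] :: real^2)"
definition "ff2 = (vector [0,1] :: real^2)"

lemma vec2_eq: "(vector [a, b] :: real^2) = a *\<^sub>R ff1 + b *\<^sub>R ff2"
  by (simp add: vec_eq_iff forall_2 ff1_def ff2_def)

lemma cont_vec2:
  assumes "continuous_on S a" "continuous_on S b"
  shows "continuous_on S (\<lambda>x. vector [a x, b x] :: real^2)"
  unfolding vec2_eq by (intro continuous_on_add continuous_on_scaleR assms continuous_on_const)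

lemma mem_S2: "x \<in> S2 \<longleftrightarrow> (x$1)^2 + (x$2)^2 + (x$3)^2 = 1"
  unfolding S2_def mem_sphere dist_0_norm norm_eq_sqrt_inner inner_vec_def sum_3
  by (simp add: power2_eq_square)

definition sbox :: "real \<Rightarrow> real \<Rightarrow> real \<Rightarrow> real \<Rightarrow> real \<Rightarrow> (real^3) set" where
  "sbox s a1 a2 b1 b2 = {x \<in> S2. 0 \<le> s * x$3 \<and> a1 \<le> x$1 \<and> x$1 \<le> a2 \<and> b1 \<le> x$2 \<and> x$2 \<le> b2}"

lemma sbox_disk:
  assumes s: "s = 1 \<or> s = -1" and ab: "a1 < a2" "b1 < b2"
    and bd: "\<bar>a1\<bar> \<le> 1/2" "\<bar>a2\<bar> \<le> 1/2" "\<bar>b1\<bar> \<le> 1/2" "\<bar>b2\<bar> \<le> 1/2"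
  shows "closed_disk_S2 (sbox s a1 a2 b1 b2)"
proof -
  let ?D = "sbox s a1 a2 b1 b2"
  let ?p = "\<lambda>x::real^3. vector [x$1, x$2] :: real^2"
  let ?B = "cbox (vector [a1, b1]) (vector [a2, b2]) :: (real^2) set"
  have cl: "closed {x::real^3. 0 \<le> s * x$3 \<and> a1 \<le> x$1 \<and> x$1 \<le> a2 \<and> b1 \<le> x$2 \<and> x$2 \<le> b2}"
    by (intro closed_Collect_conj closed_Collect_le continuous_intros)
  have eqD: "?D = S2 \<inter> {x::real^3. 0 \<le> s * x$3 \<and> a1 \<le> x$1 \<and> x$1 \<le> a2 \<and> b1 \<le> x$2 \<and> x$2 \<le> b2}"
    unfolding sbox_def by auto
  have cpt: "compact ?D"
    unfolding eqD S2_def by (intro compact_Int_closed compact_sphere cl)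
  have cont: "continuous_on ?D ?p"
    by (intro cont_vec2 continuous_intros)
  have inj: "inj_on ?p ?D"
  proof (rule inj_onI)
    fix x y assume x: "x \<in> ?D" and y: "y \<in> ?D" and e: "?p x = ?p y"
    have 1: "x$1 = y$1" "x$2 = y$2" using e by (metis vector_2)+
    have "(x$3)^2 = (y$3)^2" using x y 1 unfolding sbox_def mem_S2 by auto
    hence "x$3 = y$3 \<or> x$3 = - y$3" by (simp add: power2_eq_iff)
    moreover have "0 \<le> s * x$3" "0 \<le> s * y$3" using x y unfolding sbox_def by auto
    ultimately have "x$3 = y$3" using s by auto
    then show "x = y" using 1 by (simp add: vec_eq_iff forall_3)
  qed
  have img: "?p ` ?D = ?B"
  proof
    show "?p ` ?D \<subseteq> ?B"
      by (auto simp: sbox_def mem_box_cart forall_2)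
    show "?B \<subseteq> ?p ` ?D"
    proof
      fix u :: "real^2" assume u: "u \<in> ?B"
      hence u1: "a1 \<le> u$1" "u$1 \<le> a2" "b1 \<le> u$2" "u$2 \<le> b2"
        by (auto simp: mem_box_cart forall_2)
      have r1: "-1/2 \<le> u$1" "u$1 \<le> 1/2" "-1/2 \<le> u$2" "u$2 \<le> 1/2" using u1 bd
        by (auto simp: abs_le_iff)
      have "(u$1)^2 \<le> 1/4" using mult_nonneg_nonneg[of "1/2 - u$1" "1/2 + u$1"] r1
        by (simp add: power2_eq_square algebra_simps)
      moreover have "(u$2)^2 \<le> 1/4" using mult_nonneg_nonneg[of "1/2 - u$2" "1/2 + u$2"] r1
        by (simp add: power2_eq_square algebra_simps)
      ultimately have nn: "0 \<le> 1 - (u$1)^2 - (u$2)^2" by linarith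
      define x where "x = (vector [u$1, u$2, s * sqrt (1 - (u$1)^2 - (u$2)^2)] :: real^3)"
      have "s^2 = 1" using s by auto
      hence "x \<in> S2" unfolding mem_S2 x_def using nn by (simp add: power_mult_distrib)
      moreover have "0 \<le> s * x$3" unfolding x_def using s nn by auto
      ultimately have "x \<in> ?D" using u1 unfolding sbox_def x_def by auto
      moreover have "u = ?p x" unfolding x_def by (simp add: vec_eq_iff forall_2)
      ultimately show "u \<in> ?p ` ?D" by (rule rev_image_eqI)
    qed
  qed
  have h1: "?D homeomorphic ?B" using homeomorphic_compact[OF cpt cont img inj] .
  have bne: "box (vector [a1, b1]) (vector [a2, b2] :: real^2) \<noteq> {}"
  proof -
    have "(vector [(a1+a2)/2, (b1+b2)/2] :: real^2) \<in> box (vector [a1, b1]) (vector [a2, b2] :: real^2)"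
      unfolding mem_box_cart forall_2 vector_2 using ab by (simp add: field_simps)
    thus ?thesis by (metis empty_iff)
  qed
  have h2: "?B homeomorphic (cball (0::real^2) 1)"
    by (rule homeomorphic_convex_compact_cball[OF convex_box(1) compact_cbox]) (simp_all add: bne)
  have sub: "?D \<subseteq> S2" unfolding sbox_def by auto
  show ?thesis unfolding closed_disk_S2_def by (intro conjI sub homeomorphic_trans[OF h1 h2])
qed

definition cl :: "real \<Rightarrow> real" where "cl x = max (-1/2) (min (1/2) x)"
definition zz :: "real \<Rightarrow> real" where "zz x = 3*x - 3*\<bar>x + 1/6\<bar> + 3*\<bar>x - 1/6\<bar>"
definition wb :: "real \<Rightarrow> real" where "wb x = zz (cl x) - cl x"
definition al :: "real \<Rightarrow> real" where "al y = min 1 (max 0 (4 - 10*\<bar>y\<bar>))"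
definition cutz :: "real \<Rightarrow> real" where "cutz v = min 1 (max 0 (0 - 2 * v))"
definition phi :: "real^3 \<Rightarrow> real" where "phi x = x$1 + cutz (x$3) * al (x$2) * wb (x$1)"
definition ff :: "real^3 \<Rightarrow> real^3" where
  "ff x = vector [phi x, x$2, x$3 + \<bar>x$3\<bar> - sqrt (1 - (phi x)^2 - (x$2)^2)]"

lemma zz_bound: "\<bar>x\<bar> \<le> 1/2 \<Longrightarrow> \<bar>zz x\<bar> \<le> 1/2"
  unfolding zz_def by (auto simp: abs_if split: if_splits)
lemma zz_p1: "x \<le> -1/6 \<Longrightarrow> zz x = 3*x + 1"
  unfolding zz_def by (auto simp: abs_if split: if_splits)
lemma zz_p2: "-1/6 \<le> x \<Longrightarrow> x \<le> 1/6 \<Longrightarrow> zz x = -3*x"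
  unfolding zz_def by (auto simp: abs_if split: if_splits)
lemma zz_p3: "1/6 \<le> x \<Longrightarrow> zz x = 3*x - 1"
  unfolding zz_def by (auto simp: abs_if split: if_splits)
lemma zz_pre: assumes "\<bar>x\<bar> \<le> 1/2" shows "(\<bar>zz x\<bar> \<le> 1/4 \<longleftrightarrow>
   (-5/12 \<le> x \<and> x \<le> -1/4) \<or> (-1/12 \<le> x \<and> x \<le> 1/12) \<or> (1/4 \<le> x \<and> x \<le> 5/12))"
proof -
  have r: "-1/2 \<le> x" "x \<le> 1/2" using assms by (auto simp: abs_le_iff)
  have e: "\<bar>zz x\<bar> \<le> 1/4 \<longleftrightarrow> zz x \<le> 1/4 \<and> - zz x \<le> 1/4" by (rule abs_le_iff)
  consider "x \<le> -1/6" | "-1/6 \<le> x \<and> x \<le> 1/6" | "1/6 \<le> x" by linarith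
  then show ?thesis
  proof cases
    case 1 thus ?thesis unfolding e using r zz_p1[of x] by auto
  next
    case 2 thus ?thesis unfolding e using r zz_p2[of x] by auto
  next
    case 3 thus ?thesis unfolding e using r zz_p3[of x] by auto
  qed
qed
lemma cl_in: "\<bar>x\<bar> \<le> 1/2 \<Longrightarrow> cl x = x"
  unfolding cl_def abs_le_iff by (simp add: min_def max_def)
lemma wb_zero: assumes "1/2 \<le> \<bar>x\<bar>" shows "wb x = 0"
proof (cases "0 \<le> x")
  case True
  hence "cl x = 1/2" using assms unfolding cl_def by (simp add: min_def max_def)
  thus ?thesis unfolding wb_def zz_def by simp
next
  case False
  hence "cl x = -1/2" using assms unfolding cl_def by (simp add: min_def max_def)
  thus ?thesis unfolding wb_def zz_def by simp
qed
lemma wb_in: "\<bar>x\<bar> \<le> 1/2 \<Longrightarrow> wb x = zz x - x"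
  unfolding wb_def using cl_in by simp
lemma al_1: "\<bar>y\<bar> \<le> 3/10 \<Longrightarrow> al y = 1"
  unfolding al_def by (auto simp: min_def max_def)
lemma al_0: "2/5 \<le> \<bar>y\<bar> \<Longrightarrow> al y = 0"
  unfolding al_def by (auto simp: min_def max_def)
lemma al_rng: "0 \<le> al y" "al y \<le> 1"
  unfolding al_def by (auto simp: min_def max_def)
lemma cutz_0: "0 \<le> s \<Longrightarrow> cutz s = 0"
  unfolding cutz_def by (auto simp: min_def max_def)
lemma cutz_1: "s \<le> -1/2 \<Longrightarrow> cutz s = 1"
  unfolding cutz_def by (auto simp: min_def max_def)
lemma cutz_rng: "0 \<le> cutz s" "cutz s \<le> 1"
  unfolding cutz_def by (auto simp: min_def max_def)

lemma phi_up: "0 \<le> x$3 \<Longrightarrow> phi x = x$1"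
  unfolding phi_def by (simp add: cutz_0)
lemma phi_out: "1/2 \<le> \<bar>x$1\<bar> \<Longrightarrow> phi x = x$1"
  unfolding phi_def by (simp add: wb_zero)
lemma phi_low: assumes "x$3 \<le> -1/2" "\<bar>x$2\<bar> \<le> 3/10" "\<bar>x$1\<bar> \<le> 1/2" shows "phi x = zz (x$1)"
proof -
  have "cutz (x$3) = 1" using cutz_1[OF assms(1)] .
  moreover have "al (x$2) = 1" using al_1[OF assms(2)] .
  moreover have "wb (x$1) = zz (x$1) - x$1" using wb_in[OF assms(3)] .
  ultimately show ?thesis unfolding phi_def by simp
qed

lemma sq_le: "\<bar>u::real\<bar> \<le> c \<Longrightarrow> u^2 \<le> c^2"
  by (metis abs_ge_zero power2_abs power_mono)

lemma phi_bound: assumes "x \<in> S2" shows "(phi x)^2 + (x$2)^2 \<le> 1"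
proof -
  have S: "(x$1)^2 + (x$2)^2 + (x$3)^2 = 1" using assms mem_S2 by auto
  have x3: "0 \<le> (x$3)^2" by simp
  show ?thesis
  proof (cases "1/2 \<le> \<bar>x$1\<bar> \<or> 2/5 \<le> \<bar>x$2\<bar>")
    case True
    hence "phi x = x$1" using phi_out al_0 unfolding phi_def by auto
    hence "(phi x)^2 = (x$1)^2" by simp
    thus ?thesis using S x3 by linarith
  next
    case False
    define t where "t = cutz (x$3) * al (x$2)"
    have t: "0 \<le> t" "t \<le> 1" unfolding t_def using cutz_rng al_rng
      by (auto intro: mult_nonneg_nonneg mult_le_one)
    have x1: "\<bar>x$1\<bar> \<le> 1/2" using False by auto
    have p: "phi x = (1 - t) * x$1 + t * zz (x$1)"
      unfolding phi_def t_def wb_in[OF x1] by (simp add: algebra_simps)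
    have z: "\<bar>zz (x$1)\<bar> \<le> 1/2" using zz_bound[OF x1] .
    have "\<bar>phi x\<bar> \<le> \<bar>(1 - t) * x$1\<bar> + \<bar>t * zz (x$1)\<bar>"
      unfolding p by (rule abs_triangle_ineq)
    also have "\<dots> = (1 - t) * \<bar>x$1\<bar> + t * \<bar>zz (x$1)\<bar>"
      using t by (simp add: abs_mult)
    also have "\<dots> \<le> (1 - t) * (1/2) + t * (1/2)"
      using t x1 z by (intro add_mono mult_left_mono) auto
    also have "\<dots> = 1/2" by algebra
    finally have "\<bar>phi x\<bar> \<le> 1/2" .
    hence "(phi x)^2 \<le> (1/2)^2" by (rule sq_le)
    moreover have "(x$2)^2 \<le> (2/5)^2" using False by (intro sq_le) auto
    ultimately show ?thesis by (simp add: power2_eq_square)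
  qed
qed

lemma ff_up: assumes "x \<in> S2" "0 \<le> x$3" shows "ff x = x"
proof -
  have S: "(x$1)^2 + (x$2)^2 + (x$3)^2 = 1" using assms mem_S2 by auto
  have "sqrt (1 - (x$1)^2 - (x$2)^2) = x$3"
    using S assms(2) by (metis add_diff_cancel_left' diff_diff_eq real_sqrt_abs abs_of_nonneg add.commute)
  thus ?thesis unfolding ff_def using phi_up[OF assms(2)] assms(2)
    by (simp add: vec_eq_iff forall_3)
qed

lemma ff_low: assumes "x$3 < 0" shows "ff x = vector [phi x, x$2, - sqrt (1 - (phi x)^2 - (x$2)^2)]"
  unfolding ff_def using assms by simp

lemma ff_S2: assumes "x \<in> S2" shows "ff x \<in> S2"
proof (cases "0 \<le> x$3")
  case True thus ?thesis using ff_up assms by simp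
next
  case False
  have "0 \<le> 1 - (phi x)^2 - (x$2)^2" using phi_bound[OF assms] by linarith
  moreover have "ff x = vector [phi x, x$2, - sqrt (1 - (phi x)^2 - (x$2)^2)]"
    using ff_low False by simp
  ultimately show ?thesis unfolding mem_S2 by simp
qed

lemma cont_ff: "continuous_on S ff"
  unfolding ff_def phi_def cutz_def al_def wb_def cl_def zz_def
  by (intro cont_vec3 continuous_intros)



lemma S2_low: assumes "x \<in> S2" "x$3 \<le> 0" shows "x$3 = - sqrt (1 - (x$1)^2 - (x$2)^2)"
proof -
  have "1 - (x$1)^2 - (x$2)^2 = (x$3)^2" using assms(1) unfolding mem_S2 by linarith
  thus ?thesis using assms(2) by simp
qed

definition "DZ = sbox 1 (-1/4) (1/4) (-1/4) (1/4)"
definition "DO = sbox (-1) (-1/4) (1/4) (-1/20) (1/20)"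
definition DD :: "nat \<Rightarrow> (real^3) set" where
  "DD k = sbox (-1) (if k = 1 then -5/12 else if k = 2 then -1/12 else 1/4)
                   (if k = 1 then -1/4 else if k = 2 then 1/12 else 5/12) (-1/20) (1/20)"

lemma DD_simps: "DD 1 = sbox (-1) (-5/12) (-1/4) (-1/20) (1/20)"
  "DD 2 = sbox (-1) (-1/12) (1/12) (-1/20) (1/20)"
  "DD 3 = sbox (-1) (1/4) (5/12) (-1/20) (1/20)"
  unfolding DD_def by simp_all

lemma small_not_eq: "\<bar>a::real\<bar> \<le> 1/2 \<Longrightarrow> \<bar>b\<bar> \<le> 1/2 \<Longrightarrow> a^2 + b^2 \<le> 1/2"
proof -
  assume "\<bar>a\<bar> \<le> 1/2" "\<bar>b\<bar> \<le> 1/2"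
  hence "a^2 \<le> (1/2)^2" "b^2 \<le> (1/2)^2" by (auto intro: sq_le)
  thus ?thesis by (simp add: power2_eq_square)
qed

lemma pre0: assumes x: "x \<in> S2" shows "ff x \<in> DZ \<longleftrightarrow> x \<in> DZ"
proof (cases "0 \<le> x$3")
  case True thus ?thesis using ff_up[OF x True] by simp
next
  case False
  have "x \<notin> DZ" using False unfolding DZ_def sbox_def by auto
  moreover have "ff x \<notin> DZ"
  proof
    assume a: "ff x \<in> DZ"
    have e: "ff x = vector [phi x, x$2, - sqrt (1 - (phi x)^2 - (x$2)^2)]"
      using ff_low False by simp
    have nn: "0 \<le> 1 - (phi x)^2 - (x$2)^2" using phi_bound[OF x] by linarith
    have h: "0 \<le> - sqrt (1 - (phi x)^2 - (x$2)^2)" "\<bar>phi x\<bar> \<le> 1/4" "\<bar>x$2\<bar> \<le> 1/4"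
      using a unfolding DZ_def sbox_def e by auto
    have "0 \<le> sqrt (1 - (phi x)^2 - (x$2)^2)" using nn by simp
    hence "sqrt (1 - (phi x)^2 - (x$2)^2) = 0" using h(1) by linarith
    hence "1 - (phi x)^2 - (x$2)^2 = 0" by simp
    moreover have "(phi x)^2 + (x$2)^2 \<le> 1/2" using small_not_eq h(2,3) by auto
    ultimately show False by linarith
  qed
  ultimately show ?thesis by blast
qed

lemma pre1: assumes x: "x \<in> S2" shows "ff x \<in> DO \<longleftrightarrow> x \<in> DD 1 \<union> DD 2 \<union> DD 3"
proof (cases "0 \<le> x$3")
  case True
  have S: "(x$1)^2 + (x$2)^2 + (x$3)^2 = 1" using x mem_S2 by auto
  have "x \<notin> DO" "x \<notin> DD 1 \<union> DD 2 \<union> DD 3"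
  proof -
    { assume "x$3 \<le> 0" "-1/2 \<le> x$1" "x$1 \<le> 1/2" "-1/2 \<le> x$2" "x$2 \<le> 1/2"
      hence "x$3 = 0" "(x$1)^2 + (x$2)^2 \<le> 1/2" using True small_not_eq[of "x$1" "x$2"] by (auto simp: abs_le_iff)
      hence False using S by simp }
    thus "x \<notin> DO" "x \<notin> DD 1 \<union> DD 2 \<union> DD 3"
      unfolding DO_def DD_simps sbox_def by (auto simp: abs_le_iff)
  qed
  thus ?thesis using ff_up[OF x True] by simp
next
  case False
  have e: "ff x = vector [phi x, x$2, - sqrt (1 - (phi x)^2 - (x$2)^2)]"
    using ff_low False by simp
  have fS: "ff x \<in> S2" using ff_S2[OF x] .
  have L: "ff x \<in> DO \<longleftrightarrow> (-1/4 \<le> phi x \<and> phi x \<le> 1/4 \<and> -1/20 \<le> x$2 \<and> x$2 \<le> 1/20)"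
    using fS phi_bound[OF x] unfolding DO_def sbox_def e by auto
  have R: "x \<in> DD 1 \<union> DD 2 \<union> DD 3 \<longleftrightarrow> (((-5/12 \<le> x$1 \<and> x$1 \<le> -1/4) \<or> (-1/12 \<le> x$1 \<and> x$1 \<le> 1/12)
      \<or> (1/4 \<le> x$1 \<and> x$1 \<le> 5/12)) \<and> -1/20 \<le> x$2 \<and> x$2 \<le> 1/20)"
    using x False unfolding DD_simps sbox_def by auto
  show ?thesis
  proof (cases "-1/20 \<le> x$2 \<and> x$2 \<le> 1/20")
    case False2: False
    thus ?thesis unfolding L R by auto
  next
    case y: True
    show ?thesis
    proof (cases "1/2 \<le> \<bar>x$1\<bar>")
      case True
      hence "phi x = x$1" by (rule phi_out)
      thus ?thesis unfolding L R using True by (auto simp: abs_if split: if_splits)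
    next
      case x1: False
      have S: "(x$1)^2 + (x$2)^2 + (x$3)^2 = 1" using x mem_S2 by auto
      have "(x$1)^2 + (x$2)^2 \<le> 1/2" using x1 y small_not_eq[of "x$1" "x$2"] by auto
      hence "(x$3)^2 \<ge> 1/2" using S by linarith
      hence "\<not> (-1/2 < x$3)" using False sq_le[of "x$3" "1/2"] by (auto simp: abs_if power2_eq_square)
      hence "phi x = zz (x$1)" using y x1 by (intro phi_low) auto
      moreover have "\<bar>zz (x$1)\<bar> \<le> 1/4 \<longleftrightarrow> (-1/4 \<le> zz (x$1) \<and> zz (x$1) \<le> 1/4)" by auto
      ultimately show ?thesis unfolding L R using zz_pre[of "x$1"] x1 y by auto
    qed
  qed
qed

lemma sbox_compact: "compact (sbox s a1 a2 b1 b2)"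
proof -
  have cl: "closed {x::real^3. 0 \<le> s * x$3 \<and> a1 \<le> x$1 \<and> x$1 \<le> a2 \<and> b1 \<le> x$2 \<and> x$2 \<le> b2}"
    by (intro closed_Collect_conj closed_Collect_le continuous_intros)
  have eqD: "sbox s a1 a2 b1 b2 = S2 \<inter> {x::real^3. 0 \<le> s * x$3 \<and> a1 \<le> x$1 \<and> x$1 \<le> a2 \<and> b1 \<le> x$2 \<and> x$2 \<le> b2}"
    unfolding sbox_def by auto
  show ?thesis
    unfolding eqD S2_def by (intro compact_Int_closed compact_sphere cl)
qed

lemma low_deep: assumes "x \<in> S2" "x$3 \<le> 0" "\<bar>x$1\<bar> \<le> 1/2" "\<bar>x$2\<bar> \<le> 1/2" shows "x$3 \<le> -1/2"
proof (rule ccontr)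
  assume "\<not> x$3 \<le> -1/2"
  hence "\<bar>x$3\<bar> \<le> 1/2" using assms(2) by auto
  hence "(x$3)^2 \<le> (1/2)^2" by (rule sq_le)
  moreover have "(x$1)^2 + (x$2)^2 \<le> 1/2" using small_not_eq assms(3,4) by auto
  moreover have "(x$1)^2 + (x$2)^2 + (x$3)^2 = 1" using assms(1) mem_S2 by auto
  ultimately show False by (simp add: power2_eq_square)
qed

lemma homeo_gen:
  fixes lo hi m c :: real
  assumes b: "-5/12 \<le> lo" "hi \<le> 5/12" and m: "m \<noteq> 0"
    and lin: "\<And>u. lo \<le> u \<Longrightarrow> u \<le> hi \<Longrightarrow> zz u = m*u + c"
    and into: "\<And>u. lo \<le> u \<Longrightarrow> u \<le> hi \<Longrightarrow> -1/4 \<le> m*u+c \<and> m*u+c \<le> 1/4"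
    and onto: "\<And>v. -1/4 \<le> v \<Longrightarrow> v \<le> 1/4 \<Longrightarrow> lo \<le> (v - c)/m \<and> (v-c)/m \<le> hi"
  shows "\<exists>g. homeomorphism (sbox (-1) lo hi (-1/20) (1/20)) DO ff g"
proof -
  let ?D = "sbox (-1) lo hi (-1/20) (1/20)"
  have mem: "x \<in> ?D \<longleftrightarrow> x \<in> S2 \<and> x$3 \<le> 0 \<and> lo \<le> x$1 \<and> x$1 \<le> hi \<and> -1/20 \<le> x$2 \<and> x$2 \<le> 1/20" for x
    unfolding sbox_def by auto
  have fx: "ff x = vector [zz (x$1), x$2, - sqrt (1 - (zz (x$1))^2 - (x$2)^2)]" if x: "x \<in> ?D" for x
  proof -
    have h: "x \<in> S2" "x$3 \<le> 0" "\<bar>x$1\<bar> \<le> 1/2" "\<bar>x$2\<bar> \<le> 1/2" "\<bar>x$2\<bar> \<le> 3/10" using x b unfolding mem by auto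
    have d: "x$3 \<le> -1/2" using low_deep[OF h(1-4)] .
    hence "phi x = zz (x$1)" using h by (intro phi_low) auto
    thus ?thesis using ff_low[of x] d by simp
  qed
  have cont: "continuous_on ?D ff" by (rule cont_ff)
  have inj: "inj_on ff ?D"
  proof (rule inj_onI)
    fix x y assume x: "x \<in> ?D" and y: "y \<in> ?D" and e: "ff x = ff y"
    have "zz (x$1) = zz (y$1)" "x$2 = y$2" using e fx[OF x] fx[OF y] by (metis vector_3)+
    hence "m * x$1 + c = m * y$1 + c" using lin x y unfolding mem by metis
    hence 1: "x$1 = y$1" using m by simp
    have 2: "x$2 = y$2" by fact
    have "x$3 = y$3" using S2_low[of x] S2_low[of y] x y 1 2 unfolding mem by auto
    thus "x = y" using 1 2 by (simp add: vec_eq_iff forall_3)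
  qed
  have img: "ff ` ?D = DO"
  proof
    show "ff ` ?D \<subseteq> DO"
    proof
      fix y assume "y \<in> ff ` ?D"
      then obtain x where x: "x \<in> ?D" and y: "y = ff x" by blast
      have xS: "x \<in> S2" using x unfolding mem by auto
      have "y \<in> S2" using ff_S2[OF xS] y by simp
      moreover have zb: "-1/4 \<le> zz (x$1) \<and> zz (x$1) \<le> 1/4" using into lin x unfolding mem by metis
      moreover have "(zz (x$1))^2 + (x$2)^2 \<le> 1/2" using zb x small_not_eq[of "zz (x$1)" "x$2"]
        unfolding mem by (auto simp: abs_le_iff)
      hence "0 \<le> 1 - (zz (x$1))^2 - (x$2)^2" by linarith
      ultimately show "y \<in> DO" using x y fx[OF x] unfolding DO_def sbox_def mem by auto
    qed
    show "DO \<subseteq> ff ` ?D"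
    proof
      fix y assume y: "y \<in> DO"
      have yy: "y \<in> S2" "y$3 \<le> 0" "-1/4 \<le> y$1" "y$1 \<le> 1/4" "-1/20 \<le> y$2" "y$2 \<le> 1/20"
        using y unfolding DO_def sbox_def by auto
      define u where "u = (y$1 - c) / m"
      have u: "lo \<le> u" "u \<le> hi" using onto[OF yy(3,4)] unfolding u_def by auto
      have zu: "zz u = y$1" using lin[OF u] m unfolding u_def by (simp add: field_simps)
      have "u^2 + (y$2)^2 \<le> 1/2" using u b yy small_not_eq[of u "y$2"] by (auto simp: abs_le_iff)
      hence nn: "0 \<le> 1 - u^2 - (y$2)^2" by linarith
      define x where "x = (vector [u, y$2, - sqrt (1 - u^2 - (y$2)^2)] :: real^3)"
      have "x \<in> S2" unfolding mem_S2 x_def using nn by simp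
      hence xD: "x \<in> ?D" unfolding mem x_def using u yy nn by simp
      have "ff x = vector [y$1, y$2, - sqrt (1 - (y$1)^2 - (y$2)^2)]"
        using fx[OF xD] zu unfolding x_def by simp
      also have "\<dots> = y" using S2_low[OF yy(1,2)] by (simp add: vec_eq_iff forall_3)
      finally show "y \<in> ff ` ?D" using xD by (metis rev_image_eqI)
    qed
  qed
  show ?thesis by (rule homeomorphism_compact[OF sbox_compact cont img inj])
qed

lemma DD_homeo: "k \<in> {1,2,3::nat} \<Longrightarrow> \<exists>g. homeomorphism (DD k) DO ff g"
proof -
  assume "k \<in> {1,2,3::nat}"
  then consider "k = 1" | "k = 2" | "k = 3" by auto
  thus ?thesis
  proof cases
    case 1 show ?thesis unfolding 1 DD_simps
      by (rule homeo_gen[where m=3 and c=1]) (auto simp: zz_p1 field_simps)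
  next
    case 2 show ?thesis unfolding 2 DD_simps
      by (rule homeo_gen[where m="-3" and c=0]) (auto simp: zz_p2 field_simps)
  next
    case 3 show ?thesis unfolding 3 DD_simps
      by (rule homeo_gen[where m=3 and c="-1"]) (auto simp: zz_p3 field_simps)
  qed
qed

definition dn :: "complex \<Rightarrow> real^3" where
  "dn w = vector [Re w, Im w, - sqrt (1 - (Re w)^2 - (Im w)^2)]"
definition qq :: "complex \<Rightarrow> complex" where
  "qq w = Complex (Re w + al (Im w) * wb (Re w)) (Im w)"
definition EE :: "real \<Rightarrow> complex" where
  "EE t = Complex (-4/25 + 3/10 * cos (2*pi*t)) (1/4 * sin (2*pi*t))"
definition rr :: "real^3 \<Rightarrow> complex" where "rr x = Complex (x$1) (x$2)"

lemma cont_dn: "continuous_on S dn"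
  unfolding dn_def by (intro cont_vec3 continuous_intros)
lemma cont_qq: "continuous_on S qq"
  unfolding qq_def Complex_eq al_def wb_def cl_def zz_def by (intro continuous_intros)
lemma cont_EE: "continuous_on S EE"
  unfolding EE_def Complex_eq by (intro continuous_intros)
lemma cont_rr: "continuous_on S rr"
  unfolding rr_def Complex_eq by (intro continuous_intros)
lemma rr_dn: "rr (dn w) = w"
  unfolding rr_def dn_def by (simp add: complex_eq_iff)

lemma EE_loop: "EE 1 = EE 0"
  unfolding EE_def by simp

lemma EE_bounds: "-23/50 \<le> Re (EE t)" "Re (EE t) \<le> 7/50" "\<bar>Im (EE t)\<bar> \<le> 1/4"
proof -
  have c: "-1 \<le> cos (2*pi*t)" "cos (2*pi*t) \<le> 1" "-1 \<le> sin (2*pi*t)" "sin (2*pi*t) \<le> 1" by auto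
  have e: "Re (EE t) = -4/25 + 3/10 * cos (2*pi*t)" "Im (EE t) = 1/4 * sin (2*pi*t)"
    unfolding EE_def by simp_all
  show "-23/50 \<le> Re (EE t)" using c e by linarith
  show "Re (EE t) \<le> 7/50" using c e by linarith
  show "\<bar>Im (EE t)\<bar> \<le> 1/4" unfolding abs_le_iff using c e by linarith
qed

lemma EE_sq: "(Re (EE t))^2 + (Im (EE t))^2 \<le> 1/2"
  using EE_bounds[of t] small_not_eq[of "Re (EE t)" "Im (EE t)"] by (auto simp: abs_le_iff)

lemma EE_key: assumes "\<bar>Im (EE t)\<bar> < 3/25" shows "Re (EE t) \<le> -21/50 \<or> 1/10 \<le> Re (EE t)"
proof -
  define c where "c = cos (2*pi*t)"
  define s where "s = sin (2*pi*t)"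
  have cs: "s^2 + c^2 = 1" unfolding c_def s_def by simp
  have "\<bar>s\<bar> < 12/25" using assms unfolding EE_def s_def by (simp add: abs_mult)
  hence "s^2 < (12/25)^2"
    by (metis abs_ge_zero power2_abs power_strict_mono zero_less_numeral)
  hence c2: "c^2 > 481/625" using cs by (simp add: power2_eq_square)
  have "c > 87/100 \<or> c < -87/100"
  proof (rule ccontr)
    assume "\<not> (c > 87/100 \<or> c < -87/100)"
    hence "\<bar>c\<bar> \<le> 87/100" by auto
    hence "c^2 \<le> (87/100)^2" by (rule sq_le)
    thus False using c2 by (simp add: power2_eq_square)
  qed
  thus ?thesis unfolding EE_def c_def by auto
qed

lemma dn_S2: "(Re w)^2 + (Im w)^2 \<le> 1 \<Longrightarrow> dn w \<in> S2"
  unfolding dn_def mem_S2 by simp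

lemma ff_dn: assumes "(Re w)^2 + (Im w)^2 \<le> 1/2" shows "ff (dn w) = dn (qq w)"
proof -
  let ?x = "dn w"
  have "1/4 \<le> 1 - (Re w)^2 - (Im w)^2" using assms by linarith
  hence "sqrt (1/4) \<le> sqrt (1 - (Re w)^2 - (Im w)^2)" by (rule real_sqrt_le_mono)
  moreover have "sqrt (1/4) = (1/2::real)" by (simp add: real_sqrt_divide)
  ultimately have d: "?x$3 \<le> -1/2" unfolding dn_def by simp
  have p: "phi ?x = Re w + al (Im w) * wb (Re w)"
    unfolding phi_def cutz_1[OF d] by (simp add: dn_def)
  have "ff ?x = vector [phi ?x, ?x$2, - sqrt (1 - (phi ?x)^2 - (?x$2)^2)]"
    using ff_low[of ?x] d by simp
  thus ?thesis unfolding p by (simp add: dn_def qq_def)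
qed

lemma qq_EE: "qq (EE t) = Complex (zz (Re (EE t))) (Im (EE t))"
proof -
  have "\<bar>Re (EE t)\<bar> \<le> 1/2" "\<bar>Im (EE t)\<bar> \<le> 3/10" using EE_bounds[of t] by auto
  thus ?thesis unfolding qq_def using al_1 wb_in by simp
qed

definition "OM = {w::complex. (Re w)^2 + (Im w)^2 \<le> 1 \<and> \<not> (\<bar>Re w\<bar> \<le> 1/4 \<and> \<bar>Im w\<bar> \<le> 1/20)}"

lemma seg_OM:
  assumes p: "-1/2 \<le> Re p" "Re p \<le> 1/2" "\<bar>Im p\<bar> \<le> 1/4" "Re p < -1/4 \<or> 3/25 \<le> \<bar>Im p\<bar>"
  shows "closed_segment p (-9/10) \<subseteq> OM"
proof
  fix z assume "z \<in> closed_segment p (-9/10)"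
  then obtain u where u: "0 \<le> u" "u \<le> 1" and z: "z = (1 - u) *\<^sub>R p + u *\<^sub>R (-9/10)"
    unfolding closed_segment_def by auto
  have re: "Re z = (1 - u) * Re p - 9/10 * u" and im: "Im z = (1 - u) * Im p"
    unfolding z by (simp_all add: scaleR_conv_of_real)
  have u1: "0 \<le> 1 - u" using u by simp
  define k where "k = (1 - u) * Re p"
  have a1: "k \<le> 1/2 - u/2" unfolding k_def using mult_left_mono[OF p(2) u1] by (simp add: algebra_simps diff_divide_distrib)
  have a2: "-1/2 + u/2 \<le> k" unfolding k_def using mult_left_mono[OF p(1) u1] by (simp add: algebra_simps diff_divide_distrib)
  have rek: "Re z = k - 9/10 * u" unfolding re k_def ..
  have rb: "\<bar>Re z\<bar> \<le> 9/10" unfolding abs_le_iff rek using a1 a2 u by (intro conjI; linarith)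
  have ib: "\<bar>Im z\<bar> \<le> \<bar>Im p\<bar>" unfolding im abs_mult using u u1
    by (simp add: mult_left_le_one_le)
  have "(Re z)^2 \<le> (9/10)^2" using sq_le[OF rb] .
  moreover have "(Im z)^2 \<le> (1/4)^2" using ib p(3) by (intro sq_le) auto
  ultimately have disk: "(Re z)^2 + (Im z)^2 \<le> 1" by (simp add: power2_eq_square)
  have nb: "\<not> (\<bar>Re z\<bar> \<le> 1/4 \<and> \<bar>Im z\<bar> \<le> 1/20)"
  proof
    assume bx: "\<bar>Re z\<bar> \<le> 1/4 \<and> \<bar>Im z\<bar> \<le> 1/20"
    hence rz: "-1/4 \<le> Re z" by auto
    show False using p(4)
    proof
      assume lt: "Re p < -1/4"
      have "(1 - u) * (Re p + 1/4) \<le> 0" using lt u1 by (simp add: mult_nonneg_nonpos)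
      moreover have "Re z + 1/4 = (1 - u) * (Re p + 1/4) - 13/20 * u" unfolding re by (simp add: field_simps)
      ultimately have "u = 0" using rz u by linarith
      thus False using rz lt re by simp
    next
      assume ip: "3/25 \<le> \<bar>Im p\<bar>"
      define m where "m = (1 - u) * (Re p + 9/10)"
      have e: "Re z + 9/10 = m" unfolding re m_def by (simp add: field_simps)
      have "(1 - u) * (Re p + 9/10) \<le> (1 - u) * (14/10)" using p(2) u1 by (intro mult_left_mono) auto
      hence "m \<le> 14/10 - 14/10 * u" unfolding m_def by (simp add: algebra_simps)
      hence "13/28 \<le> 1 - u" using rz e by linarith
      hence "13/28 * (3/25) \<le> (1 - u) * \<bar>Im p\<bar>" using ip by (intro mult_mono) auto
      moreover have "\<bar>Im z\<bar> = (1 - u) * \<bar>Im p\<bar>" unfolding im abs_mult using u1 by simp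
      ultimately show False using bx by linarith
    qed
  qed
  show "z \<in> OM" unfolding OM_def using disk nb by simp
qed

lemma qqEE_good: "-1/2 \<le> Re (qq (EE t)) \<and> Re (qq (EE t)) \<le> 1/2 \<and> \<bar>Im (qq (EE t))\<bar> \<le> 1/4 \<and>
    (Re (qq (EE t)) < -1/4 \<or> 3/25 \<le> \<bar>Im (qq (EE t))\<bar>)"
proof -
  have b: "-23/50 \<le> Re (EE t)" "Re (EE t) \<le> 7/50" "\<bar>Im (EE t)\<bar> \<le> 1/4" by (rule EE_bounds)+
  have x1: "\<bar>Re (EE t)\<bar> \<le> 1/2" using b by auto
  have "\<bar>zz (Re (EE t))\<bar> \<le> 1/2" using zz_bound[OF x1] .
  moreover have "zz (Re (EE t)) < -1/4 \<or> 3/25 \<le> \<bar>Im (EE t)\<bar>"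
  proof (cases "3/25 \<le> \<bar>Im (EE t)\<bar>")
    case False
    hence "Re (EE t) \<le> -21/50 \<or> 1/10 \<le> Re (EE t)" using EE_key by auto
    thus ?thesis
    proof
      assume "Re (EE t) \<le> -21/50"
      thus ?thesis using zz_p1[of "Re (EE t)"] b by auto
    next
      assume "1/10 \<le> Re (EE t)"
      thus ?thesis using zz_p2[of "Re (EE t)"] b by auto
    qed
  qed simp
  ultimately show ?thesis unfolding qq_EE using b by (auto simp: abs_le_iff)
qed

lemma dn_OM: assumes "w \<in> OM" shows "dn w \<in> S2 - int_S2 (DZ \<union> DO)"
proof -
  have w: "(Re w)^2 + (Im w)^2 \<le> 1" "\<not> (\<bar>Re w\<bar> \<le> 1/4 \<and> \<bar>Im w\<bar> \<le> 1/20)" using assms unfolding OM_def by auto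
  have S: "dn w \<in> S2" using dn_S2 w(1) .
  have "dn w \<notin> DZ"
  proof
    assume "dn w \<in> DZ"
    hence h: "0 \<le> - sqrt (1 - (Re w)^2 - (Im w)^2)" "\<bar>Re w\<bar> \<le> 1/4" "\<bar>Im w\<bar> \<le> 1/4"
      unfolding DZ_def sbox_def dn_def by (auto simp: abs_le_iff)
    have "0 \<le> sqrt (1 - (Re w)^2 - (Im w)^2)" using w(1) by simp
    hence "sqrt (1 - (Re w)^2 - (Im w)^2) = 0" using h(1) by linarith
    hence "1 - (Re w)^2 - (Im w)^2 = 0" by simp
    moreover have "(Re w)^2 + (Im w)^2 \<le> 1/2" using small_not_eq h(2,3) by auto
    ultimately show False by linarith
  qed
  moreover have "dn w \<notin> DO"
    using w(2) unfolding DO_def sbox_def dn_def by (auto simp: abs_le_iff)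
  ultimately have "dn w \<notin> DZ \<union> DO" by blast
  moreover have "int_S2 (DZ \<union> DO) \<subseteq> DZ \<union> DO" unfolding int_S2_def by (rule interior_of_subset)
  ultimately show ?thesis using S by blast
qed

lemma null_part: "\<exists>a. homotopic_loops (S2 - int_S2 (DZ \<union> DO)) (ff \<circ> (dn \<circ> EE)) (linepath a a)"
proof -
  have pq: "path (qq \<circ> EE)" unfolding path_def by (intro continuous_on_compose cont_qq cont_EE)
  have h: "homotopic_loops OM (qq \<circ> EE) (linepath (-9/10) (-9/10))"
  proof (rule homotopic_loops_linear)
    show "path (qq \<circ> EE)" by (rule pq)
    show "path (linepath (-9/10) (-9/10::complex))" by simp
    show "pathfinish (qq \<circ> EE) = pathstart (qq \<circ> EE)" unfolding pathfinish_def pathstart_def using EE_loop by simp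
    show "pathfinish (linepath (-9/10) (-9/10::complex)) = pathstart (linepath (-9/10) (-9/10))" by simp
    fix t :: real assume "t \<in> {0..1}"
    show "closed_segment ((qq \<circ> EE) t) (linepath (-9/10) (-9/10) t) \<subseteq> OM"
      unfolding linepath_refl o_def using qqEE_good[of t] by (intro seg_OM) auto
  qed
  have h2: "homotopic_loops (S2 - int_S2 (DZ \<union> DO)) (dn \<circ> (qq \<circ> EE)) (dn \<circ> linepath (-9/10) (-9/10))"
    by (rule homotopic_loops_continuous_image[OF h cont_dn]) (use dn_OM in auto)
  have e1: "dn \<circ> (qq \<circ> EE) = ff \<circ> (dn \<circ> EE)"
    by (rule ext) (simp add: ff_dn[OF EE_sq])
  have e2: "dn \<circ> linepath (-9/10) (-9/10) = linepath (dn (-9/10)) (dn (-9/10))"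
    by (simp add: linepath_refl o_def)
  show ?thesis using h2 unfolding e1 e2 by blast
qed

lemma circ_eq: "circlepath (-4/25) (3/10) t = Complex (-4/25 + 3/10 * cos (2*pi*t)) (3/10 * sin (2*pi*t))"
  unfolding circlepath by (simp add: complex_eq_iff Re_exp Im_exp)

lemma EE_circ: "homotopic_loops (-{0}) EE (circlepath (-4/25) (3/10))"
proof (rule homotopic_loops_linear)
  show "path EE" unfolding path_def by (rule cont_EE)
  show "path (circlepath (-4/25) (3/10))" by simp
  show "pathfinish EE = pathstart EE" unfolding pathfinish_def pathstart_def using EE_loop by simp
  show "pathfinish (circlepath (-4/25) (3/10)) = pathstart (circlepath (-4/25) (3/10))" by simp
  fix t :: real assume "t \<in> {0..1}"
  show "closed_segment (EE t) (circlepath (-4/25) (3/10) t) \<subseteq> - {0}"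
  proof
    fix z assume "z \<in> closed_segment (EE t) (circlepath (-4/25) (3/10) t)"
    then obtain u where u: "0 \<le> u" "u \<le> 1" and z: "z = (1 - u) *\<^sub>R EE t + u *\<^sub>R circlepath (-4/25) (3/10) t"
      unfolding closed_segment_def by auto
    have re: "Re z = -4/25 + 3/10 * cos (2*pi*t)"
      unfolding z circ_eq EE_def by (simp add: algebra_simps)
    have im: "Im z = ((1 - u)/4 + 3/10 * u) * sin (2*pi*t)"
      unfolding z circ_eq EE_def by (simp add: field_simps)
    show "z \<in> - {0}"
    proof
      assume "z \<in> {0}"
      hence z0: "Re z = 0" "Im z = 0" by auto
      have "(1 - u)/4 + 3/10 * u = 1/4 + u/20" by (simp add: field_simps)
      hence "(1 - u)/4 + 3/10 * u > 0" using u by linarith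
      hence "sin (2*pi*t) = 0" using z0(2) im by simp
      hence "(cos (2*pi*t))^2 = 1" using sin_cos_squared_add[of "2*pi*t"] by simp
      hence "cos (2*pi*t) = 1 \<or> cos (2*pi*t) = -1" by (simp add: power2_eq_1_iff)
      thus False using z0(1) re by auto
    qed
  qed
qed

lemma wind_EE: "winding_number EE 0 = 1"
proof -
  have "winding_number EE 0 = winding_number (circlepath (-4/25) (3/10)) 0"
    by (rule winding_number_homotopic_loops[OF EE_circ])
  also have "\<dots> = 1" by (rule winding_number_circlepath) simp
  finally show ?thesis .
qed

lemma open_helper:
  "open {x::real^3. 0 < s * x$3 \<and> \<bar>x$1\<bar> < e1 \<and> \<bar>x$2\<bar> < e2}"
  by (intro open_Collect_conj open_Collect_less continuous_intros)

lemma int_pole: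
  assumes "x \<in> S2" "x$1 = 0" "x$2 = 0"
  shows "x \<in> int_S2 (DZ \<union> DD 1 \<union> DD 2 \<union> DD 3)"
proof -
  have "(x$3)^2 = 1" using assms mem_S2 by auto
  hence "x$3 = 1 \<or> x$3 = -1" by (simp add: power2_eq_1_iff)
  thus ?thesis
  proof
    assume x3: "x$3 = 1"
    let ?T = "S2 \<inter> {x::real^3. 0 < 1 * x$3 \<and> \<bar>x$1\<bar> < 1/4 \<and> \<bar>x$2\<bar> < 1/4}"
    have o: "openin (top_of_set S2) ?T" by (rule openin_open_Int[OF open_helper])
    have "?T \<subseteq> DZ" unfolding DZ_def sbox_def by auto
    hence "?T \<subseteq> DZ \<union> DD 1 \<union> DD 2 \<union> DD 3" by blast
    hence "?T \<subseteq> int_S2 (DZ \<union> DD 1 \<union> DD 2 \<union> DD 3)" unfolding int_S2_def using o by (rule interior_of_maximal)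
    moreover have "x \<in> ?T" using assms x3 by simp
    ultimately show ?thesis by blast
  next
    assume x3: "x$3 = -1"
    let ?T = "S2 \<inter> {x::real^3. 0 < (-1) * x$3 \<and> \<bar>x$1\<bar> < 1/12 \<and> \<bar>x$2\<bar> < 1/20}"
    have o: "openin (top_of_set S2) ?T" by (rule openin_open_Int[OF open_helper])
    have "?T \<subseteq> DD 2" unfolding DD_simps sbox_def by auto
    hence "?T \<subseteq> DZ \<union> DD 1 \<union> DD 2 \<union> DD 3" by blast
    hence "?T \<subseteq> int_S2 (DZ \<union> DD 1 \<union> DD 2 \<union> DD 3)" unfolding int_S2_def using o by (rule interior_of_maximal)
    moreover have "x \<in> ?T" using assms x3 by simp
    ultimately show ?thesis by blast
  qed
qed

lemma rr_nz: "x \<in> S2 - int_S2 (DZ \<union> DD 1 \<union> DD 2 \<union> DD 3) \<Longrightarrow> rr x \<noteq> 0"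
  using int_pole unfolding rr_def by (auto simp: complex_eq_iff)

lemma not_null:
  "\<not> (\<exists>a. homotopic_loops (S2 - int_S2 (DZ \<union> DD 1 \<union> DD 2 \<union> DD 3)) (dn \<circ> EE) (linepath a a))"
proof
  let ?W = "S2 - int_S2 (DZ \<union> DD 1 \<union> DD 2 \<union> DD 3)"
  assume "\<exists>a. homotopic_loops ?W (dn \<circ> EE) (linepath a a)"
  then obtain a where h: "homotopic_loops ?W (dn \<circ> EE) (linepath a a)" by blast
  have aW: "a \<in> ?W" using homotopic_loops_imp_subset[OF h] by auto
  have h1: "homotopic_loops (rr ` ?W) (rr \<circ> (dn \<circ> EE)) (rr \<circ> linepath a a)"
    by (rule homotopic_loops_continuous_image[OF h cont_rr]) auto
  have sub: "rr ` ?W \<subseteq> - {0}" using rr_nz by auto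
  have h2: "homotopic_loops (- {0}) (rr \<circ> (dn \<circ> EE)) (rr \<circ> linepath a a)"
    using homotopic_loops_subset[OF h1 sub] .
  have e1: "rr \<circ> (dn \<circ> EE) = EE" by (rule ext) (simp add: rr_dn)
  have e2: "rr \<circ> linepath a a = linepath (rr a) (rr a)" by (simp add: linepath_refl o_def)
  have "winding_number EE 0 = winding_number (linepath (rr a) (rr a)) 0"
    using winding_number_homotopic_loops[OF h2] unfolding e1 e2 .
  also have "\<dots> = 0" using rr_nz[OF aW] by simp
  finally show False using wind_EE by simp
qed

lemma gamma_avoid: "dn (EE t) \<in> S2 - int_S2 (DZ \<union> DD 1 \<union> DD 2 \<union> DD 3)"
proof -
  let ?w = "EE t"
  have sq: "(Re ?w)^2 + (Im ?w)^2 \<le> 1/2" by (rule EE_sq)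
  have S: "dn ?w \<in> S2" using dn_S2 sq by simp
  have "0 < sqrt (1 - (Re ?w)^2 - (Im ?w)^2)" using sq by simp
  hence x3: "(dn ?w)$3 < 0" unfolding dn_def by simp
  have nZ: "dn ?w \<notin> DZ" using x3 unfolding DZ_def sbox_def by auto
  have b: "-23/50 \<le> Re ?w" "Re ?w \<le> 7/50" by (rule EE_bounds)+
  have nD: "dn ?w \<notin> DD k" if k: "k \<in> {1,2,3::nat}" for k
  proof
    assume a: "dn ?w \<in> DD k"
    hence "\<bar>Im ?w\<bar> \<le> 1/20" using k unfolding DD_def sbox_def dn_def by (auto simp: abs_le_iff)
    hence "Re ?w \<le> -21/50 \<or> 1/10 \<le> Re ?w" by (intro EE_key) auto
    thus False using a k b unfolding DD_def sbox_def dn_def by auto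
  qed
  have "dn ?w \<notin> DZ \<union> DD 1 \<union> DD 2 \<union> DD 3" using nZ nD[of 1] nD[of 2] nD[of 3] by auto
  moreover have "int_S2 (DZ \<union> DD 1 \<union> DD 2 \<union> DD 3) \<subseteq> DZ \<union> DD 1 \<union> DD 2 \<union> DD 3"
    unfolding int_S2_def by (rule interior_of_subset)
  ultimately show ?thesis using S by blast
qed

theorem lemma3p4:
  shows "\<exists>(D0 :: (real^3) set) (D1 :: (real^3) set) (D :: nat \<Rightarrow> (real^3) set) (f :: real^3 \<Rightarrow> real^3).
    closed_disk_S2 D0 \<and> closed_disk_S2 D1 \<and> D0 \<inter> D1 = {} \<and>
    continuous_on S2 f \<and> f ` S2 \<subseteq> S2 \<and>
    {x \<in> S2. f x \<in> D0} = D0 \<and> (\<forall>x\<in>D0. f x = x) \<and>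
    (\<forall>k\<in>{1,2,3}. closed_disk_S2 (D k)) \<and>
    (\<forall>j\<in>{1,2,3}. \<forall>k\<in>{1,2,3}. j \<noteq> k \<longrightarrow> D j \<inter> D k = {}) \<and>
    {x \<in> S2. f x \<in> D1} = D 1 \<union> D 2 \<union> D 3 \<and>
    (\<forall>k\<in>{1,2,3}. \<exists>g. homeomorphism (D k) D1 f g) \<and>
    (\<exists>\<gamma>. path \<gamma> \<and> pathfinish \<gamma> = pathstart \<gamma> \<and>
       path_image \<gamma> \<subseteq> S2 - int_S2 (D0 \<union> D 1 \<union> D 2 \<union> D 3) \<and>
       \<not> (\<exists>a. homotopic_loops (S2 - int_S2 (D0 \<union> D 1 \<union> D 2 \<union> D 3)) \<gamma> (linepath a a)) \<and>
       (\<exists>a. homotopic_loops (S2 - int_S2 (D0 \<union> D1)) (f \<circ> \<gamma>) (linepath a a)))"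
proof -
  have c0: "closed_disk_S2 DZ" unfolding DZ_def by (rule sbox_disk) auto
  have c1: "closed_disk_S2 DO" unfolding DO_def by (rule sbox_disk) auto
  have dis01: "DZ \<inter> DO = {}"
  proof (rule ccontr)
    assume "DZ \<inter> DO \<noteq> {}"
    then obtain x where x: "x \<in> DZ" "x \<in> DO" by blast
    hence h: "x \<in> S2" "x$3 = 0" "\<bar>x$1\<bar> \<le> 1/2" "\<bar>x$2\<bar> \<le> 1/2"
      unfolding DZ_def DO_def sbox_def by (auto simp: abs_le_iff)
    have "(x$1)^2 + (x$2)^2 \<le> 1/2" using small_not_eq h(3,4) by auto
    thus False using h(1,2) mem_S2 by auto
  qed
  have DZS: "DZ \<subseteq> S2" unfolding DZ_def sbox_def by auto
  have p0: "{x \<in> S2. ff x \<in> DZ} = DZ" using pre0 DZS by auto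
  have id0: "\<forall>x\<in>DZ. ff x = x" using ff_up unfolding DZ_def sbox_def by auto
  have cD: "\<forall>k\<in>{1,2,3::nat}. closed_disk_S2 (DD k)"
    unfolding DD_def by (auto intro!: sbox_disk)
  have disj: "\<forall>j\<in>{1,2,3::nat}. \<forall>k\<in>{1,2,3::nat}. j \<noteq> k \<longrightarrow> DD j \<inter> DD k = {}"
    unfolding DD_def sbox_def by auto
  have DDS: "DD 1 \<union> DD 2 \<union> DD 3 \<subseteq> S2" unfolding DD_def sbox_def by auto
  have p1: "{x \<in> S2. ff x \<in> DO} = DD 1 \<union> DD 2 \<union> DD 3" using pre1 DDS by auto
  have hom: "\<forall>k\<in>{1,2,3::nat}. \<exists>g. homeomorphism (DD k) DO ff g" using DD_homeo by blast
  have pth: "path (dn \<circ> EE)" unfolding path_def by (intro continuous_on_compose cont_dn cont_EE)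
  have lp: "pathfinish (dn \<circ> EE) = pathstart (dn \<circ> EE)" unfolding pathfinish_def pathstart_def using EE_loop by simp
  have pim: "path_image (dn \<circ> EE) \<subseteq> S2 - int_S2 (DZ \<union> DD 1 \<union> DD 2 \<union> DD 3)"
    unfolding path_image_def using gamma_avoid by auto
  show ?thesis
    apply (rule exI[of _ DZ], rule exI[of _ DO], rule exI[of _ DD], rule exI[of _ ff])
    using c0 c1 dis01 cont_ff[of S2] ff_S2 p0 id0 cD disj p1 hom pth lp pim not_null null_part
    by blast
qed

end
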